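(* Let $\mathcal V$ be a finite vocabulary, $L\ge 1$ a sequence length, and $p_{\mathrm{data}}$ a distribution on $\mathcal V^L$ that factorizes over positions: $$p_{\mathrm{data}}(x)=\prod_{i=1}^{L} q^i_{x^i},$$ where each $q^i$ is a probability distribution on $\mathcal V$. Suppose the diffusion language model $p_\theta$ is optimally trained in the sense that for every partially masked sequence $x_t$ and every masked position $i$ of $x_t$, $p_\theta(x_0^i=v\mid x_t)=q^i_v$ for all $v\in\mathcal V$. Let $p_{\mathrm{lcr}}$ and $p_{\mathrm{dlcr}}$ be the distributions on $\mathcal V^L$ of the sequences produced (starting from the fully masked sequence) by low-confidence remasking and by dynamic low-confidence remasking with any threshold $\tau\in(0,1]$, respectively, as defined in the context. Then $$\mathcal H(p_{\mathrm{lcr}})\le \mathcal H(p_{\mathrm{data}}),\qquad \mathcal H(p_{\mathrm{dlcr}})\le \mathcal H(p_{\mathrm{data}}),$$ where $\mathcal H$ denotes the Shannon entropy of a distribution on $\mathcal V^L$.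
   Context: Superscripts index positions in a sequence of length $L$ over vocabulary $\mathcal V$; there is an extra mask symbol. The positions $1,\dots,L$ are partitioned into consecutive blocks of length $B$ (with $B$ dividing $L$), and blocks are generated one after another from left to right; generation of a block starts only after every position of the previous block has been decoded. Generation starts from the fully masked sequence. At each denoising step with current partially decoded sequence $x_t$, for every still-masked position $i$ in the current block one independently samples a token $y^i\sim p_\theta(x_0^i=\cdot\mid x_t)$ and assigns it confidence $c^i=p_\theta(x_0^i=y^i\mid x_t)$. Low-confidence remasking (with number of steps equal to block length, so one token per step): the single masked position of the current block with the highest confidence is set to its sampled token $y^i$, and all other masked positions remain masked (their samples are discarded). Dynamic low-confidence remasking with threshold $\tau$: the position with the highest confidence is decoded, and in addition every masked position in the current block whose confidence strictly exceeds $\tau$ is set to its sampled token; all remaining positions stay masked. Ties in confidence are broken by a fixed deterministic order. Low-confidence remasking coincides with dynamic low-confidence remasking with $\tau=1$. *)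

theory Defs
  imports "HOL-Probability.Probability"
begin

text \<open>Partially decoded sequences: positions 0..L-1; None = mask symbol.\<close>
type_synonym 'v pseq = "nat \<Rightarrow> 'v option"

definition shannon_entropy :: "'a pmf \<Rightarrow> real" where
  "shannon_entropy p = (\<Sum>x\<in>set_pmf p. - pmf p x * log 2 (pmf p x))"

definition cur_block :: "nat \<Rightarrow> nat \<Rightarrow> 'v pseq \<Rightarrow> nat set" where
  "cur_block L B x = (let m = (LEAST i. i < L \<and> x i = None)
                      in {m div B * B ..< (m div B + 1) * B})"

definition masked_in_block :: "nat \<Rightarrow> nat \<Rightarrow> 'v pseq \<Rightarrow> nat set" where
  "masked_in_block L B x = {i \<in> cur_block L B x. i < L \<and> x i = None}"

text \<open>Independent sampling y^i ~ p_theta(x_0^i = . | x_t) for the masked positions M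
  of the current block (positions outside M get None).\<close>
definition sample_block ::
  "nat \<Rightarrow> nat \<Rightarrow> ('v pseq \<Rightarrow> nat \<Rightarrow> 'v pmf) \<Rightarrow> 'v pseq \<Rightarrow> 'v pseq pmf" where
  "sample_block L B ptheta x =
     Pi_pmf (masked_in_block L B x) None (\<lambda>i. map_pmf Some (ptheta x i))"

definition confidence :: "('v pseq \<Rightarrow> nat \<Rightarrow> 'v pmf) \<Rightarrow> 'v pseq \<Rightarrow> 'v pseq \<Rightarrow> nat \<Rightarrow> real" where
  "confidence ptheta x y i = pmf (ptheta x i) (the (y i))"

definition best_pos ::
  "nat \<Rightarrow> nat \<Rightarrow> (nat \<Rightarrow> nat) \<Rightarrow> ('v pseq \<Rightarrow> nat \<Rightarrow> 'v pmf) \<Rightarrow> 'v pseq \<Rightarrow> 'v pseq \<Rightarrow> nat" where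
  "best_pos L B pr ptheta x y =
     (let M = masked_in_block L B x; c = confidence ptheta x y; cmax = Max (c ` M)
      in arg_min_on pr {i \<in> M. c i = cmax})"

definition lcr_step ::
  "nat \<Rightarrow> nat \<Rightarrow> (nat \<Rightarrow> nat) \<Rightarrow> ('v pseq \<Rightarrow> nat \<Rightarrow> 'v pmf) \<Rightarrow> 'v pseq \<Rightarrow> 'v pseq pmf" where
  "lcr_step L B pr ptheta x =
     (if \<forall>i<L. x i \<noteq> None then return_pmf x
      else map_pmf (\<lambda>y. let D = {best_pos L B pr ptheta x y}
                        in (\<lambda>i. if i \<in> D then y i else x i))
             (sample_block L B ptheta x))"

definition dlcr_step ::
  "nat \<Rightarrow> nat \<Rightarrow> real \<Rightarrow> (nat \<Rightarrow> nat) \<Rightarrow> ('v pseq \<Rightarrow> nat \<Rightarrow> 'v pmf) \<Rightarrow> 'v pseq \<Rightarrow> 'v pseq pmf" where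
  "dlcr_step L B tau pr ptheta x =
     (if \<forall>i<L. x i \<noteq> None then return_pmf x
      else map_pmf (\<lambda>y. let M = masked_in_block L B x;
                            D = insert (best_pos L B pr ptheta x y)
                                  {i \<in> M. confidence ptheta x y i > tau}
                        in (\<lambda>i. if i \<in> D then y i else x i))
             (sample_block L B ptheta x))"

text \<open>Output distribution on V^L (as lists of length L): start from the fully masked
  sequence and apply the step kernel L times (each step decodes at least one position,
  and fully decoded sequences are fixed points).\<close>
definition generate :: "nat \<Rightarrow> ('v pseq \<Rightarrow> 'v pseq pmf) \<Rightarrow> 'v list pmf" where
  "generate L K = map_pmf (\<lambda>x. map (\<lambda>i. the (x i)) [0..<L])
                    (((\<lambda>p. bind_pmf p K) ^^ L) (return_pmf (\<lambda>_. None)))"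

end

theory Submission
  imports Defs
begin


lemma cheb:
  fixes Q :: "'v::finite pmf" and h :: "'v \<Rightarrow> real"
  assumes mono: "\<And>w w'. pmf Q w' \<le> pmf Q w \<Longrightarrow> h w' \<le> h w"
  shows "(\<Sum>w\<in>UNIV. pmf Q w * (h w * (- log 2 (pmf Q w) - (\<Sum>u\<in>UNIV. pmf Q u * - log 2 (pmf Q u))))) \<le> 0"
proof -
  define a where "a = pmf Q"
  define l where "l = (\<lambda>w. - log 2 (a w))"
  have s1: "(\<Sum>w\<in>UNIV. a w) = 1" unfolding a_def by (rule sum_pmf_eq_1) auto
  have tm: "a w * a w' * ((h w - h w') * (l w - l w')) \<le> 0" for w w'
  proof (cases "a w > 0 \<and> a w' > 0")
    case True
    show ?thesis
    proof (cases "a w' \<le> a w")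
      case c: True
      have "h w' \<le> h w" using mono c unfolding a_def by blast
      moreover have "l w \<le> l w'" unfolding l_def using c True by simp
      ultimately have "(h w - h w') * (l w - l w') \<le> 0" by (intro mult_nonneg_nonpos) auto
      then show ?thesis using True by (simp add: mult_nonneg_nonpos)
    next
      case c: False
      have "h w \<le> h w'" using mono c unfolding a_def by force
      moreover have "l w' \<le> l w" unfolding l_def using c True by simp
      ultimately have "(h w - h w') * (l w - l w') \<le> 0" by (intro mult_nonpos_nonneg) auto
      then show ?thesis using True by (simp add: mult_nonneg_nonpos)
    qed
  next
    case False
    then have "a w = 0 \<or> a w' = 0" unfolding a_def using pmf_nonneg[of Q w] pmf_nonneg[of Q w'] by linarith
    then show ?thesis by auto
  qed
  have S: "(\<Sum>w\<in>UNIV. \<Sum>w'\<in>UNIV. a w * a w' * ((h w - h w') * (l w - l w'))) \<le> 0"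
    by (intro sum_nonpos tm)
  have eq: "(\<Sum>w\<in>UNIV. \<Sum>w'\<in>UNIV. a w * a w' * ((h w - h w') * (l w - l w')))
     = 2 * (\<Sum>w\<in>UNIV. a w * (h w * (l w - (\<Sum>u\<in>UNIV. a u * l u))))"
  proof -
    have "(\<Sum>w\<in>UNIV. \<Sum>w'\<in>UNIV. a w * a w' * ((h w - h w') * (l w - l w')))
      = (\<Sum>w\<in>UNIV. \<Sum>w'\<in>UNIV. a w' * (a w * h w * l w) - (a w * h w) * (a w' * l w') - (a w' * h w') * (a w * l w) + a w * (a w' * h w' * l w'))"
      by (intro sum.cong refl) (simp add: algebra_simps)
    also have "\<dots> = (\<Sum>w\<in>UNIV. a w * h w * l w) - (\<Sum>w\<in>UNIV. a w * h w) * (\<Sum>w\<in>UNIV. a w * l w)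
        - (\<Sum>w\<in>UNIV. a w * h w) * (\<Sum>w\<in>UNIV. a w * l w) + (\<Sum>w\<in>UNIV. a w * h w * l w)"
    proof -
      define X where "X w = a w * h w * l w" for w
      define Y where "Y w = a w * h w" for w
      define Z where "Z w = a w * l w" for w
      have e1: "(\<Sum>w\<in>UNIV. \<Sum>w'\<in>UNIV. a w' * X w) = (\<Sum>w\<in>UNIV. X w)"
        by (simp add: sum_distrib_right[symmetric] s1)
      have e4: "(\<Sum>w\<in>UNIV. \<Sum>w'\<in>UNIV. a w * X w') = (\<Sum>w\<in>UNIV. X w)"
        by (simp add: sum_distrib_left[symmetric] sum_distrib_right[symmetric] s1)
      have e2: "(\<Sum>w\<in>UNIV. \<Sum>w'\<in>UNIV. Y w * Z w') = (\<Sum>w\<in>UNIV. Y w) * (\<Sum>w\<in>UNIV. Z w)"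
        by (simp add: sum_product)
      have e3: "(\<Sum>w\<in>UNIV. \<Sum>w'\<in>UNIV. Y w' * Z w) = (\<Sum>w\<in>UNIV. Y w) * (\<Sum>w\<in>UNIV. Z w)"
        by (subst sum.swap) (simp add: sum_product)
      show ?thesis using e1 e2 e3 e4 unfolding X_def Y_def Z_def
        by (simp add: sum.distrib sum_subtractf)
    qed
    also have "\<dots> = 2 * (\<Sum>w\<in>UNIV. a w * (h w * (l w - (\<Sum>u\<in>UNIV. a u * l u))))"
    proof -
      define c where "c = (\<Sum>u\<in>UNIV. a u * l u)"
      have "(\<Sum>w\<in>UNIV. a w * (h w * (l w - c))) = (\<Sum>w\<in>UNIV. a w * h w * l w - a w * h w * c)"
        by (intro sum.cong refl) (simp add: algebra_simps)
      also have "\<dots> = (\<Sum>w\<in>UNIV. a w * h w * l w) - (\<Sum>w\<in>UNIV. a w * h w) * c"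
        by (simp add: sum_subtractf sum_distrib_right)
      finally show ?thesis unfolding c_def by simp
    qed
    finally show ?thesis .
  qed
  show ?thesis using S eq unfolding a_def l_def by simp
qed

lemma gibbs:
  fixes P R :: "'a pmf"
  assumes fin: "finite (set_pmf P)" and pos: "\<And>x. x \<in> set_pmf P \<Longrightarrow> pmf R x > 0"
  shows "shannon_entropy P \<le> (\<Sum>x\<in>set_pmf P. pmf P x * (- log 2 (pmf R x)))"
proof -
  have t: "- pmf P x * log 2 (pmf P x) \<le> pmf P x * (- log 2 (pmf R x)) + (pmf R x - pmf P x) / ln 2"
    if x: "x \<in> set_pmf P" for x
  proof -
    define p r where "p = pmf P x" and "r = pmf R x"
    have p: "p > 0" using x unfolding p_def by (simp add: pmf_positive)
    have r: "r > 0" using pos x unfolding r_def by simp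
    have "ln (r / p) \<le> r / p - 1" using p r by (intro ln_le_minus_one) simp
    then have "p * ln (r / p) \<le> p * (r / p - 1)" using p by (intro mult_left_mono) auto
    also have "\<dots> = r - p" using p by (simp add: field_simps)
    finally have "p * (ln r - ln p) \<le> r - p" using p r by (simp add: ln_div)
    then have "p * (ln r - ln p) / ln 2 \<le> (r - p) / ln 2" by (intro divide_right_mono) auto
    then show ?thesis unfolding p_def[symmetric] r_def[symmetric] log_def
      by (simp add: field_simps)
  qed
  have "shannon_entropy P \<le> (\<Sum>x\<in>set_pmf P. pmf P x * (- log 2 (pmf R x)) + (pmf R x - pmf P x) / ln 2)"
    unfolding shannon_entropy_def by (intro sum_mono t)
  also have "\<dots> = (\<Sum>x\<in>set_pmf P. pmf P x * (- log 2 (pmf R x))) + ((\<Sum>x\<in>set_pmf P. pmf R x) - (\<Sum>x\<in>set_pmf P. pmf P x)) / ln 2"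
    by (simp add: sum.distrib sum_subtractf sum_negf sum_divide_distrib[symmetric])
  also have "(\<Sum>x\<in>set_pmf P. pmf P x) = 1" using fin by (intro sum_pmf_eq_1) auto
  also have "(\<Sum>x\<in>set_pmf P. pmf R x) \<le> 1"
    using fin by (simp add: measure_measure_pmf_finite[symmetric] measure_pmf.prob_le_1)
  then have "((\<Sum>x\<in>set_pmf P. pmf R x) - 1) / ln 2 \<le> 0" by (intro divide_nonpos_pos) auto
  finally show ?thesis by simp
qed



definition ell :: "(nat \<Rightarrow> 'v pmf) \<Rightarrow> nat \<Rightarrow> 'v \<Rightarrow> real" where
  "ell q i w = - log 2 (pmf (q i) w)"
definition cc :: "(nat \<Rightarrow> 'v::finite pmf) \<Rightarrow> nat \<Rightarrow> real" where
  "cc q i = (\<Sum>u\<in>UNIV. pmf (q i) u * ell q i u)"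
definition phi :: "(nat \<Rightarrow> 'v::finite pmf) \<Rightarrow> nat \<Rightarrow> 'v option \<Rightarrow> real" where
  "phi q i ov = (case ov of None \<Rightarrow> cc q i | Some w \<Rightarrow> ell q i w)"

lemma finite_dflt_funs:
  assumes "finite A"
  shows "finite {f :: 'a \<Rightarrow> 'b::finite. \<forall>x. x \<notin> A \<longrightarrow> f x = d}"
proof -
  have "{f :: 'a \<Rightarrow> 'b. \<forall>x. x \<notin> A \<longrightarrow> f x = d} = PiE_dflt A d (\<lambda>_. UNIV)"
    by (auto simp: PiE_dflt_def)
  then show ?thesis using assms by (simp add: finite_PiE_dflt)
qed

lemma exp_piece:
  fixes q :: "nat \<Rightarrow> 'v::finite pmf"
  assumes finM: "finite M" and iM: "i \<in> M"
    and mono: "\<And>f w w'. pmf (q i) w' \<le> pmf (q i) w \<Longrightarrow> i \<in> Dy (f(i:=Some w')) \<Longrightarrow> i \<in> Dy (f(i:=Some w))"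
  shows "measure_pmf.expectation (Pi_pmf M None (\<lambda>j. map_pmf Some (q j)))
           (\<lambda>y. if i \<in> Dy y then phi q i (y i) - cc q i else 0) \<le> 0"
proof -
  define A where "A = M - {i}"
  define Q where "Q = (\<lambda>j. map_pmf Some (q j))"
  define P where "P = Pi_pmf A None Q"
  define g where "g = (\<lambda>y. if i \<in> Dy y then phi q i (y i) - cc q i else 0)"
  have MA: "M = insert i A" "finite A" "i \<notin> A" using iM finM unfolding A_def by auto
  have finP: "finite (set_pmf P)" unfolding P_def
    using finite_dflt_funs[OF MA(2), where d="None::'v option"] set_Pi_pmf_subset[OF MA(2), of None Q] by (meson finite_subset)
  have "Pi_pmf M None Q = map_pmf (\<lambda>(v,f). f(i:=v)) (pair_pmf (Q i) P)"
    unfolding P_def MA(1) by (rule Pi_pmf_insert[OF MA(2,3)])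
  also have "\<dots> = map_pmf (\<lambda>(f,v). f(i:=v)) (pair_pmf P (Q i))"
    by (subst pair_commute_pmf) (simp add: pmf.map_comp o_def case_prod_unfold)
  finally have Y: "Pi_pmf M None Q = map_pmf (\<lambda>(f,v). f(i:=v)) (pair_pmf P (Q i))" .
  have inner: "measure_pmf.expectation (Q i) (\<lambda>v. g (f(i:=v))) \<le> 0" for f
  proof -
    define h where "h = (\<lambda>w. if i \<in> Dy (f(i:=Some w)) then 1 else (0::real))"
    have hm: "pmf (q i) w' \<le> pmf (q i) w \<Longrightarrow> h w' \<le> h w" for w w'
      using mono[of w' w f] unfolding h_def by auto
    have "measure_pmf.expectation (Q i) (\<lambda>v. g (f(i:=v)))
        = measure_pmf.expectation (q i) (\<lambda>w. g (f(i:=Some w)))"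
      unfolding Q_def by simp
    also have "\<dots> = (\<Sum>w\<in>UNIV. pmf (q i) w *\<^sub>R g (f(i:=Some w)))"
      by (rule integral_measure_pmf) auto
    also have "\<dots> = (\<Sum>w\<in>UNIV. pmf (q i) w * (h w * (- log 2 (pmf (q i) w) - (\<Sum>u\<in>UNIV. pmf (q i) u * - log 2 (pmf (q i) u)))))"
      by (intro sum.cong refl) (simp add: g_def h_def phi_def cc_def ell_def)
    also have "\<dots> \<le> 0" by (rule cheb) (rule hm)
    finally show ?thesis .
  qed
  have "measure_pmf.expectation (Pi_pmf M None Q) g
      = measure_pmf.expectation (pair_pmf P (Q i)) (\<lambda>(f,v). g (f(i:=v)))"
    unfolding Y by (simp add: case_prod_unfold)
  also have "\<dots> = (\<Sum>f\<in>set_pmf P. pmf P f *\<^sub>R measure_pmf.expectation (bind_pmf (Q i) (\<lambda>v. return_pmf (f, v))) (\<lambda>(f,v). g (f(i:=v))))"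
    unfolding pair_pmf_def by (rule pmf_expectation_bind) (auto simp: finP)
  also have "\<dots> = (\<Sum>f\<in>set_pmf P. pmf P f * measure_pmf.expectation (Q i) (\<lambda>v. g (f(i:=v))))"
    by (intro sum.cong refl) (simp add: map_pmf_def[symmetric])
  also have "\<dots> \<le> 0"
    by (intro sum_nonpos mult_nonneg_nonpos inner) auto
  finally show ?thesis unfolding Q_def g_def .
qed



definition Sset :: "nat \<Rightarrow> 'v pseq set" where
  "Sset L = {x. \<forall>j. j \<notin> {..<L} \<longrightarrow> x j = None}"
definition Good :: "nat \<Rightarrow> (nat \<Rightarrow> 'v pmf) \<Rightarrow> 'v pseq set" where
  "Good L q = {x \<in> Sset L. \<forall>i w. x i = Some w \<longrightarrow> pmf (q i) w > 0}"
definition cnt :: "nat \<Rightarrow> 'v pseq \<Rightarrow> nat" where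
  "cnt L x = card {i\<in>{..<L}. x i = None}"
definition Phi :: "nat \<Rightarrow> (nat \<Rightarrow> 'v::finite pmf) \<Rightarrow> 'v pseq \<Rightarrow> real" where
  "Phi L q x = (\<Sum>i<L. phi q i (x i))"
definition stepD :: "nat \<Rightarrow> nat \<Rightarrow> ('v pseq \<Rightarrow> nat \<Rightarrow> 'v pmf) \<Rightarrow> ('v pseq \<Rightarrow> 'v pseq \<Rightarrow> nat set) \<Rightarrow> 'v pseq \<Rightarrow> 'v pseq pmf" where
  "stepD L B ptheta D x = (if \<forall>i<L. x i \<noteq> None then return_pmf x
      else map_pmf (\<lambda>y i. if i \<in> D x y then y i else x i) (sample_block L B ptheta x))"

lemma finite_Sset: "finite (Sset (L::nat) :: ('v::finite) pseq set)"
  unfolding Sset_def by (rule finite_dflt_funs) simp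

lemma finite_Good: "finite (Good (L::nat) q :: ('v::finite) pseq set)"
  unfolding Good_def by (rule finite_subset[OF _ finite_Sset]) auto

lemma masked_props:
  assumes B: "B \<ge> 1" and nd: "\<not>(\<forall>i<L. x i \<noteq> None)"
  shows "masked_in_block L B x \<noteq> {}" "finite (masked_in_block L B x)"
    "masked_in_block L B x \<subseteq> {..<L}" "\<And>i. i \<in> masked_in_block L B x \<Longrightarrow> x i = None"
proof -
  define m where "m = (LEAST i. i < L \<and> x i = None)"
  have ex: "\<exists>i. i < L \<and> x i = None" using nd by auto
  have m: "m < L" "x m = None" using LeastI_ex[OF ex] unfolding m_def by auto
  have "m div B * B \<le> m" by (simp add: div_times_less_eq_dividend)
  moreover have "m < (m div B + 1) * B"
    using B by (metis add.commute div_mult_mod_eq mod_less_divisor mult_Suc nat_add_left_cancel_less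
        not_less_eq_eq plus_1_eq_Suc zero_less_iff_neq_zero le_zero_eq one_neq_zero)
  ultimately have "m \<in> cur_block L B x" unfolding cur_block_def m_def[symmetric] Let_def by auto
  then show "masked_in_block L B x \<noteq> {}" unfolding masked_in_block_def using m by auto
  show "finite (masked_in_block L B x)" "masked_in_block L B x \<subseteq> {..<L}"
    unfolding masked_in_block_def by (auto intro: finite_subset[of _ "{..<L}"])
  show "\<And>i. i \<in> masked_in_block L B x \<Longrightarrow> x i = None" unfolding masked_in_block_def by auto
qed



lemma step_main:
  fixes q :: "nat \<Rightarrow> 'v::finite pmf"
  assumes B: "B \<ge> 1"
    and pt: "\<And>xt i. (\<forall>j\<ge>L. xt j = None) \<Longrightarrow> i < L \<Longrightarrow> xt i = None \<Longrightarrow> ptheta xt i = q i"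
    and x: "x \<in> Good L q"
    and Dsub: "\<And>y. \<not>(\<forall>i<L. x i \<noteq> None) \<Longrightarrow> D x y \<subseteq> masked_in_block L B x"
    and Dne: "\<And>y. \<not>(\<forall>i<L. x i \<noteq> None) \<Longrightarrow> D x y \<noteq> {}"
    and Dmono: "\<And>i f w w'. \<not>(\<forall>i<L. x i \<noteq> None) \<Longrightarrow> i \<in> masked_in_block L B x \<Longrightarrow>
        pmf (q i) w' \<le> pmf (q i) w \<Longrightarrow> i \<in> D x (f(i:=Some w')) \<Longrightarrow> i \<in> D x (f(i:=Some w))"
  shows "set_pmf (stepD L B ptheta D x) \<subseteq> Good L q \<and>
    (\<forall>x'\<in>set_pmf (stepD L B ptheta D x). cnt L x' \<le> cnt L x \<and> (cnt L x > 0 \<longrightarrow> cnt L x' < cnt L x)) \<and>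
    measure_pmf.expectation (stepD L B ptheta D x) (Phi L q) \<le> Phi L q x"
proof (cases "\<forall>i<L. x i \<noteq> None")
  case True
  then have "cnt L x = 0" unfolding cnt_def by simp
  then show ?thesis using True x unfolding stepD_def by simp
next
  case nd: False
  define M where "M = masked_in_block L B x"
  note Mp = masked_props[OF B nd, folded M_def]
  have xS: "\<forall>j\<ge>L. x j = None" using x unfolding Good_def Sset_def by auto
  define Q where "Q = (\<lambda>i. map_pmf Some (q i))"
  have SB: "sample_block L B ptheta x = Pi_pmf M None Q"
    unfolding sample_block_def M_def[symmetric] Q_def
    by (intro Pi_pmf_cong refl) (use Mp in \<open>auto intro!: pt[OF xS] arg_cong[where f="map_pmf Some"]\<close>)
  have setSB: "set_pmf (Pi_pmf M None Q) = PiE_dflt M None (set_pmf \<circ> Q)"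
    by (rule set_Pi_pmf[OF Mp(2)])
  have finSB: "finite (set_pmf (Pi_pmf M None Q))"
    using finite_dflt_funs[OF Mp(2), where d="None::'v option"] set_Pi_pmf_subset[OF Mp(2), of None Q]
    by (meson finite_subset)
  define upd where "upd = (\<lambda>y i. if i \<in> D x y then y i else x i)"
  have st: "stepD L B ptheta D x = map_pmf upd (Pi_pmf M None Q)"
    unfolding stepD_def upd_def SB using nd by (simp only: if_False)
  have DM: "D x y \<subseteq> M" for y using Dsub[OF nd] unfolding M_def .
  have good: "upd y \<in> Good L q" if y: "y \<in> set_pmf (Pi_pmf M None Q)" for y
  proof -
    have "upd y j = None" if "j \<notin> {..<L}" for j
      using DM[of y] Mp(3) that xS unfolding upd_def by auto
    moreover have "pmf (q i) w > 0" if "upd y i = Some w" for i w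
    proof (cases "i \<in> D x y")
      case True
      then have "i \<in> M" using DM by auto
      then have "y i \<in> Some ` set_pmf (q i)" using y[unfolded setSB] unfolding PiE_dflt_def Q_def by auto
      then show ?thesis using that True unfolding upd_def by (auto simp: pmf_positive)
    next
      case False
      then show ?thesis using that x unfolding upd_def Good_def by auto
    qed
    ultimately show ?thesis unfolding Good_def Sset_def by auto
  qed
  have cntlt: "cnt L (upd y) < cnt L x" if y: "y \<in> set_pmf (Pi_pmf M None Q)" for y
  proof -
    have ySome: "y i \<noteq> None" if "i \<in> M" for i
      using y[unfolded setSB] that unfolding PiE_dflt_def Q_def by auto
    obtain d where d: "d \<in> D x y" using Dne[OF nd] by auto
    have "d \<in> M" using d DM by auto
    then have dd: "d < L" "x d = None" using Mp by auto
    have "{i\<in>{..<L}. upd y i = None} \<subseteq> {i\<in>{..<L}. x i = None} - {d}"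
    proof
      fix i assume "i \<in> {i\<in>{..<L}. upd y i = None}"
      then have i: "i < L" "upd y i = None" by auto
      show "i \<in> {i\<in>{..<L}. x i = None} - {d}"
      proof (cases "i \<in> D x y")
        case True
        then show ?thesis using i ySome[of i] DM[of y] unfolding upd_def by auto
      next
        case False
        then show ?thesis using i d unfolding upd_def by auto
      qed
    qed
    also have "\<dots> \<subset> {i\<in>{..<L}. x i = None}" using dd by auto
    finally show ?thesis unfolding cnt_def by (intro psubset_card_mono) auto
  qed
  define g where "g = (\<lambda>i y. if i \<in> D x y then phi q i (y i) - cc q i else 0)"
  have Phiupd: "Phi L q (upd y) = Phi L q x + (\<Sum>i\<in>M. g i y)" for y
  proof -
    have "Phi L q (upd y) = (\<Sum>i<L. phi q i (x i) + g i y)"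
      unfolding Phi_def
    proof (intro sum.cong refl)
      fix i assume "i \<in> {..<L}"
      show "phi q i (upd y i) = phi q i (x i) + g i y"
      proof (cases "i \<in> D x y")
        case True
        then have "x i = None" using DM Mp(4) by auto
        then show ?thesis using True unfolding upd_def g_def by (simp add: phi_def)
      qed (simp add: upd_def g_def)
    qed
    also have "\<dots> = Phi L q x + (\<Sum>i<L. g i y)" unfolding Phi_def by (simp add: sum.distrib)
    also have "(\<Sum>i<L. g i y) = (\<Sum>i\<in>M. g i y)"
      using Mp(3) DM[of y] by (intro sum.mono_neutral_right) (auto simp: g_def)
    finally show ?thesis .
  qed
  have "measure_pmf.expectation (stepD L B ptheta D x) (Phi L q)
      = measure_pmf.expectation (Pi_pmf M None Q) (\<lambda>y. Phi L q x + (\<Sum>i\<in>M. g i y))"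
    unfolding st by (simp add: Phiupd)
  also have "\<dots> = Phi L q x + (\<Sum>i\<in>M. measure_pmf.expectation (Pi_pmf M None Q) (g i))"
    by (simp add: Bochner_Integration.integral_add integral_sum integrable_measure_pmf_finite[OF finSB])
  also have "(\<Sum>i\<in>M. measure_pmf.expectation (Pi_pmf M None Q) (g i)) \<le> 0"
  proof (intro sum_nonpos)
    fix i assume i: "i \<in> M"
    show "measure_pmf.expectation (Pi_pmf M None Q) (g i) \<le> 0"
      unfolding Q_def g_def
      by (rule exp_piece[OF Mp(2) i]) (rule Dmono[OF nd i[unfolded M_def]])
  qed
  finally have E: "measure_pmf.expectation (stepD L B ptheta D x) (Phi L q) \<le> Phi L q x" by simp
  show ?thesis using E good cntlt unfolding st by (auto simp: less_imp_le)
qed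



lemma best_in:
  assumes "finite (masked_in_block L B x)" "masked_in_block L B x \<noteq> {}"
  shows "best_pos L B pr ptheta x y \<in> masked_in_block L B x"
proof -
  define M where "M = masked_in_block L B x"
  define c where "c = confidence ptheta x y"
  define T where "T = {i \<in> M. c i = Max (c ` M)}"
  have M: "finite M" "M \<noteq> {}" using assms unfolding M_def by auto
  have "Max (c ` M) \<in> c ` M" using M by (intro Max_in) auto
  then have "T \<noteq> {}" unfolding T_def by auto
  have "finite T" using M unfolding T_def by auto
  then have "arg_min_on pr T \<in> T" using \<open>T \<noteq> {}\<close> by (rule arg_min_if_finite)
  then show ?thesis unfolding best_pos_def Let_def M_def[symmetric] c_def[symmetric] T_def[symmetric]
    unfolding T_def by auto
qed

lemma best_mono:
  fixes q :: "nat \<Rightarrow> 'v pmf"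
  assumes fin: "finite (masked_in_block L B x)" and ne: "masked_in_block L B x \<noteq> {}"
    and inj: "inj_on pr (masked_in_block L B x)"
    and i: "i \<in> masked_in_block L B x" and pti: "ptheta x i = q i"
    and le: "pmf (q i) w' \<le> pmf (q i) w"
    and b1: "best_pos L B pr ptheta x (f(i:=Some w')) = i"
  shows "best_pos L B pr ptheta x (f(i:=Some w)) = i"
proof -
  define M where "M = masked_in_block L B x"
  define c1 where "c1 = confidence ptheta x (f(i:=Some w'))"
  define c2 where "c2 = confidence ptheta x (f(i:=Some w))"
  define T1 where "T1 = {j \<in> M. c1 j = Max (c1 ` M)}"
  define T2 where "T2 = {j \<in> M. c2 j = Max (c2 ` M)}"
  have M: "finite M" "M \<noteq> {}" "i \<in> M" using fin ne i unfolding M_def by auto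
  have cj: "c1 j = c2 j" if "j \<noteq> i" for j using that unfolding c1_def c2_def confidence_def by simp
  have ci: "c1 i \<le> c2 i" unfolding c1_def c2_def confidence_def using pti le by simp
  have a1: "arg_min_on pr T1 = i" using b1 unfolding best_pos_def Let_def M_def[symmetric] c1_def[symmetric] T1_def[symmetric] .
  have T1: "finite T1" "T1 \<noteq> {}"
  proof -
    show "finite T1" using M unfolding T1_def by auto
    have "Max (c1 ` M) \<in> c1 ` M" using M by (intro Max_in) auto
    then show "T1 \<noteq> {}" unfolding T1_def by auto
  qed
  have iT1: "i \<in> T1" using arg_min_if_finite(1)[OF T1, of pr] a1 by simp
  have c1max: "c1 j \<le> c1 i" if "j \<in> M" for j
    using iT1 that M unfolding T1_def by auto
  have c2max: "c2 j \<le> c2 i" if "j \<in> M" for j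
    using c1max[OF that] cj[of j] ci by (cases "j = i") auto
  have Max2: "Max (c2 ` M) = c2 i" using M c2max by (intro Max_eqI) auto
  have T2sub: "T2 \<subseteq> T1"
  proof
    fix j assume j: "j \<in> T2"
    then have jM: "j \<in> M" and "c2 j = c2 i" unfolding T2_def Max2 by auto
    then have "c1 j = c1 i" using cj[of j] ci c1max[OF jM] by (cases "j = i") auto
    then show "j \<in> T1" using jM iT1 unfolding T1_def by auto
  qed
  have iT2: "i \<in> T2" unfolding T2_def Max2 using M by auto
  have T2: "finite T2" "T2 \<noteq> {}" using T2sub T1(1) iT2 by (auto intro: finite_subset)
  define b where "b = arg_min_on pr T2"
  have bT2: "b \<in> T2" unfolding b_def by (rule arg_min_if_finite(1)[OF T2])
  have "pr b \<le> pr i" unfolding b_def by (rule arg_min_least[OF T2 iT2])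
  moreover have "pr i \<le> pr b" using arg_min_least[OF T1, of b pr] bT2 T2sub a1 by auto
  ultimately have "pr b = pr i" by simp
  moreover have "b \<in> M" using bT2 unfolding T2_def by auto
  ultimately have "b = i" using inj M(3) unfolding M_def by (auto dest: inj_onD)
  then show ?thesis unfolding best_pos_def Let_def M_def[symmetric] c2_def[symmetric] T2_def[symmetric] b_def .
qed

lemma lcr_eq: "lcr_step L B pr ptheta = stepD L B ptheta (\<lambda>x y. {best_pos L B pr ptheta x y})"
  by (intro ext) (unfold lcr_step_def stepD_def Let_def, rule refl)

lemma dlcr_eq: "dlcr_step L B tau pr ptheta = stepD L B ptheta
   (\<lambda>x y. insert (best_pos L B pr ptheta x y) {i \<in> masked_in_block L B x. confidence ptheta x y i > tau})"
  by (intro ext) (unfold dlcr_step_def stepD_def Let_def, rule refl)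



lemma exp_cong:
  fixes f g :: "'a \<Rightarrow> real"
  assumes "\<And>x. x \<in> set_pmf p \<Longrightarrow> f x = g x"
  shows "measure_pmf.expectation p f = measure_pmf.expectation p g"
  using assms by (intro integral_cong_AE) (auto simp: AE_measure_pmf_iff)

lemma log2_prod:
  fixes f :: "'a \<Rightarrow> real"
  assumes "finite I" "\<And>i. i \<in> I \<Longrightarrow> f i > 0"
  shows "log 2 (prod f I) = (\<Sum>i\<in>I. log 2 (f i))"
proof -
  have "ln (prod f I) = (\<Sum>i\<in>I. ln (f i))" using assms by (intro ln_prod) force+
  then show ?thesis by (simp add: log_def sum_divide_distrib)
qed

lemma iterate:
  fixes q :: "nat \<Rightarrow> 'v::finite pmf"
  assumes stepP: "\<And>x. x \<in> Good L q \<Longrightarrow> set_pmf (K x) \<subseteq> Good L q \<and>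
    (\<forall>x'\<in>set_pmf (K x). cnt L x' \<le> cnt L x \<and> (cnt L x > 0 \<longrightarrow> cnt L x' < cnt L x)) \<and>
    measure_pmf.expectation (K x) (Phi L q) \<le> Phi L q x"
  shows "set_pmf (((\<lambda>p. bind_pmf p K) ^^ n) (return_pmf (\<lambda>_. None))) \<subseteq> Good L q \<and>
    (\<forall>x\<in>set_pmf (((\<lambda>p. bind_pmf p K) ^^ n) (return_pmf (\<lambda>_. None))). cnt L x \<le> L - n) \<and>
    measure_pmf.expectation (((\<lambda>p. bind_pmf p K) ^^ n) (return_pmf (\<lambda>_. None))) (Phi L q) \<le> Phi L q (\<lambda>_. None)"
proof (induction n)
  case 0
  have "(\<lambda>_. None) \<in> Good L q" unfolding Good_def Sset_def by auto
  moreover have "cnt L ((\<lambda>_. None) :: 'v pseq) = L" unfolding cnt_def by simp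
  ultimately show ?case by simp
next
  case (Suc n)
  define p where "p = ((\<lambda>p. bind_pmf p K) ^^ n) (return_pmf (\<lambda>_. None))"
  have IH: "set_pmf p \<subseteq> Good L q" "\<forall>x\<in>set_pmf p. cnt L x \<le> L - n"
    "measure_pmf.expectation p (Phi L q) \<le> Phi L q (\<lambda>_. None)"
    using Suc.IH unfolding p_def by auto
  have eq: "((\<lambda>p. bind_pmf p K) ^^ Suc n) (return_pmf (\<lambda>_. None)) = bind_pmf p K"
    unfolding p_def by simp
  have s1: "set_pmf (bind_pmf p K) \<subseteq> Good L q" using IH(1) stepP by fastforce
  have s2: "cnt L x' \<le> L - Suc n" if xin: "x' \<in> set_pmf (bind_pmf p K)" for x'
  proof -
    obtain x where x: "x \<in> set_pmf p" "x' \<in> set_pmf (K x)" using xin unfolding set_bind_pmf by blast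
    have xg: "x \<in> Good L q" using x IH(1) by auto
    have c: "cnt L x \<le> L - n" using IH(2) x by auto
    show ?thesis
    proof (cases "cnt L x > 0")
      case True
      then have "cnt L x' < cnt L x" using stepP[OF xg] x by auto
      then show ?thesis using c by linarith
    next
      case False
      then show ?thesis using stepP[OF xg] x by fastforce
    qed
  qed
  have "measure_pmf.expectation (bind_pmf p K) (Phi L q)
      = (\<Sum>a\<in>Good L q. pmf p a *\<^sub>R measure_pmf.expectation (K a) (Phi L q))"
    using IH(1) stepP by (intro pmf_expectation_bind finite_Good) (meson finite_subset finite_Good)+
  also have "\<dots> \<le> (\<Sum>a\<in>Good L q. pmf p a *\<^sub>R Phi L q a)"
    using stepP by (intro sum_mono) (auto intro: mult_left_mono)
  also have "\<dots> = measure_pmf.expectation p (Phi L q)"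
    using IH(1) by (intro integral_measure_pmf[symmetric] finite_Good) (auto simp: set_pmf_eq)
  also have "\<dots> \<le> Phi L q (\<lambda>_. None)" by (rule IH(3))
  finally show ?case using s1 s2 unfolding eq by auto
qed



lemma pd_eq:
  fixes q :: "nat \<Rightarrow> 'v::finite pmf" and p_data :: "'v list pmf"
  assumes pd: "\<And>x. pmf p_data x = (if length x = L then (\<Prod>i<L. pmf (q i) (x ! i)) else 0)"
  shows "p_data = map_pmf (\<lambda>f. map f [0..<L]) (Pi_pmf {..<L} undefined q)"
proof (rule pmf_eqI)
  fix xs :: "'v list"
  define P where "P = Pi_pmf {..<L} undefined q"
  define T where "T = (\<lambda>f::nat \<Rightarrow> 'v. map f [0..<L])"
  have "pmf (map_pmf T P) xs = measure P (T -` {xs})" by (rule pmf_map)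
  also have "\<dots> = pmf p_data xs"
  proof (cases "length xs = L")
    case False
    then have "T -` {xs} = {}" unfolding T_def by auto
    then show ?thesis using False pd by simp
  next
    case True
    define f0 where "f0 = (\<lambda>i. if i < L then xs ! i else undefined)"
    have sub: "set_pmf P \<subseteq> {f. \<forall>x. x \<notin> {..<L} \<longrightarrow> f x = undefined}"
      unfolding P_def by (rule set_Pi_pmf_subset) simp
    have "T -` {xs} \<inter> set_pmf P = {f0} \<inter> set_pmf P"
    proof (intro equalityI subsetI)
      fix f assume f: "f \<in> T -` {xs} \<inter> set_pmf P"
      then have "map f [0..<L] = xs" unfolding T_def by auto
      then have "f i = xs ! i" if "i < L" for i using that by (metis True diff_zero length_upt nth_map nth_upt plus_nat.add_0)
      moreover have "f i = undefined" if "\<not> i < L" for i using f sub that by auto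
      ultimately have "f = f0" unfolding f0_def by auto
      then show "f \<in> {f0} \<inter> set_pmf P" using f by auto
    next
      fix f assume f: "f \<in> {f0} \<inter> set_pmf P"
      have "map f0 [0..<L] = xs" using True by (intro nth_equalityI) (auto simp: f0_def)
      then show "f \<in> T -` {xs} \<inter> set_pmf P" using f unfolding T_def by auto
    qed
    then have "measure P (T -` {xs}) = measure P {f0}"
      by (metis measure_Int_set_pmf)
    also have "\<dots> = pmf P f0" by (rule measure_pmf_single)
    also have "\<dots> = (\<Prod>i<L. pmf (q i) (f0 i))" unfolding P_def by (rule pmf_Pi') (auto simp: f0_def)
    also have "\<dots> = (\<Prod>i<L. pmf (q i) (xs ! i))" by (intro prod.cong) (auto simp: f0_def)
    finally show ?thesis using pd True by simp
  qed
  finally show "pmf p_data xs = pmf (map_pmf (\<lambda>f. map f [0..<L]) (Pi_pmf {..<L} undefined q)) xs"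
    unfolding P_def T_def by simp
qed

lemma H_pd:
  fixes q :: "nat \<Rightarrow> 'v::finite pmf" and p_data :: "'v list pmf"
  assumes pd: "\<And>x. pmf p_data x = (if length x = L then (\<Prod>i<L. pmf (q i) (x ! i)) else 0)"
  shows "shannon_entropy p_data = (\<Sum>i<L. cc q i)"
proof -
  define P where "P = Pi_pmf {..<L} undefined q"
  define T where "T = (\<lambda>f::nat \<Rightarrow> 'v. map f [0..<L])"
  have pdeq: "p_data = map_pmf T P" unfolding P_def T_def by (rule pd_eq[OF pd])
  have finP: "finite (set_pmf P)"
    using finite_dflt_funs[of "{..<L}", where d="undefined::'v"] set_Pi_pmf_subset[of "{..<L}" undefined q]
    unfolding P_def by (meson finite_lessThan finite_subset)
  have finS: "finite (set_pmf p_data)" unfolding pdeq using finP by simp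
  have "shannon_entropy p_data = (\<Sum>xs\<in>set_pmf p_data. pmf p_data xs *\<^sub>R (- log 2 (pmf p_data xs)))"
    unfolding shannon_entropy_def by simp
  also have "\<dots> = measure_pmf.expectation p_data (\<lambda>xs. - log 2 (pmf p_data xs))"
    by (rule integral_measure_pmf[symmetric, OF finS]) auto
  also have "\<dots> = measure_pmf.expectation P (\<lambda>f. - log 2 (pmf p_data (T f)))"
    unfolding pdeq by simp
  also have "\<dots> = measure_pmf.expectation P (\<lambda>f. \<Sum>i<L. ell q i (f i))"
  proof (rule exp_cong)
    fix f assume f: "f \<in> set_pmf P"
    have fi: "f i \<in> set_pmf (q i)" if "i < L" for i
      using f that unfolding P_def set_Pi_pmf[OF finite_lessThan] PiE_dflt_def by auto
    have "pmf p_data (T f) = (\<Prod>i<L. pmf (q i) (f i))" unfolding pd T_def by simp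
    then have "log 2 (pmf p_data (T f)) = (\<Sum>i<L. log 2 (pmf (q i) (f i)))"
      using fi by (auto intro!: log2_prod simp: pmf_positive)
    then show "- log 2 (pmf p_data (T f)) = (\<Sum>i<L. ell q i (f i))"
      unfolding ell_def by (simp add: sum_negf)
  qed
  also have "\<dots> = (\<Sum>i<L. measure_pmf.expectation P (\<lambda>f. ell q i (f i)))"
    by (simp add: integral_sum integrable_measure_pmf_finite[OF finP])
  also have "\<dots> = (\<Sum>i<L. cc q i)"
  proof (intro sum.cong refl)
    fix i assume i: "i \<in> {..<L}"
    have "measure_pmf.expectation P (\<lambda>f. ell q i (f i))
        = measure_pmf.expectation (map_pmf (\<lambda>f. f i) P) (ell q i)" by simp
    also have "map_pmf (\<lambda>f. f i) P = q i" unfolding P_def using i by (simp add: Pi_pmf_component)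
    also have "measure_pmf.expectation (q i) (ell q i) = (\<Sum>u\<in>UNIV. pmf (q i) u *\<^sub>R ell q i u)"
      by (rule integral_measure_pmf) auto
    finally show "measure_pmf.expectation P (\<lambda>f. ell q i (f i)) = cc q i" unfolding cc_def by simp
  qed
  finally show ?thesis .
qed



lemma H_gen:
  fixes q :: "nat \<Rightarrow> 'v::finite pmf" and p_data :: "'v list pmf"
  assumes pd: "\<And>x. pmf p_data x = (if length x = L then (\<Prod>i<L. pmf (q i) (x ! i)) else 0)"
  assumes stepP: "\<And>x. x \<in> Good L q \<Longrightarrow> set_pmf (K x) \<subseteq> Good L q \<and>
    (\<forall>x'\<in>set_pmf (K x). cnt L x' \<le> cnt L x \<and> (cnt L x > 0 \<longrightarrow> cnt L x' < cnt L x)) \<and>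
    measure_pmf.expectation (K x) (Phi L q) \<le> Phi L q x"
  shows "shannon_entropy (generate L K) \<le> (\<Sum>i<L. cc q i)"
proof -
  define p where "p = ((\<lambda>p. bind_pmf p K) ^^ L) (return_pmf (\<lambda>_. None))"
  define toL where "toL = (\<lambda>x::'v pseq. map (\<lambda>i. the (x i)) [0..<L])"
  have it: "set_pmf p \<subseteq> Good L q" "\<forall>x\<in>set_pmf p. cnt L x \<le> L - L"
    "measure_pmf.expectation p (Phi L q) \<le> Phi L q (\<lambda>_. None)"
    using iterate[of L q K L, OF stepP] unfolding p_def by blast+
  have gen: "generate L K = map_pmf toL p" unfolding generate_def p_def toL_def ..
  have dec: "x i \<noteq> None" if "x \<in> set_pmf p" "i < L" for x i
  proof -
    have "cnt L x = 0" using it(2) that by auto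
    then have "{i\<in>{..<L}. x i = None} = {}" unfolding cnt_def by simp
    then show ?thesis using that by auto
  qed
  have pos: "pmf (q i) (the (x i)) > 0" if "x \<in> set_pmf p" "i < L" for x i
    using dec[OF that] it(1) that(1) unfolding Good_def by auto
  have pdx: "pmf p_data (toL x) = (\<Prod>i<L. pmf (q i) (the (x i)))" for x
    unfolding pd toL_def by simp
  have finG: "finite (set_pmf (generate L K))"
    unfolding gen using finite_subset[OF it(1) finite_Good] by simp
  have "shannon_entropy (generate L K) \<le> (\<Sum>xs\<in>set_pmf (generate L K). pmf (generate L K) xs * (- log 2 (pmf p_data xs)))"
  proof (rule gibbs[OF finG])
    fix xs assume "xs \<in> set_pmf (generate L K)"
    then obtain x where x: "x \<in> set_pmf p" "xs = toL x" unfolding gen by auto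
    show "pmf p_data xs > 0" unfolding x(2) pdx using pos[OF x(1)] by (auto intro: prod_pos)
  qed
  also have "\<dots> = measure_pmf.expectation (generate L K) (\<lambda>xs. - log 2 (pmf p_data xs))"
    by (subst integral_measure_pmf[OF finG]) auto
  also have "\<dots> = measure_pmf.expectation p (\<lambda>x. - log 2 (pmf p_data (toL x)))"
    unfolding gen by simp
  also have "\<dots> = measure_pmf.expectation p (Phi L q)"
  proof (rule exp_cong)
    fix x assume x: "x \<in> set_pmf p"
    have "log 2 (pmf p_data (toL x)) = (\<Sum>i<L. log 2 (pmf (q i) (the (x i))))"
      unfolding pdx using pos[OF x] by (auto intro!: log2_prod)
    moreover have "Phi L q x = (\<Sum>i<L. - log 2 (pmf (q i) (the (x i))))"
      unfolding Phi_def using dec[OF x] by (intro sum.cong refl) (force simp: phi_def ell_def split: option.split)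
    ultimately show "- log 2 (pmf p_data (toL x)) = Phi L q x" by (simp add: sum_negf)
  qed
  also have "\<dots> \<le> Phi L q (\<lambda>_. None)" by (rule it(3))
  also have "\<dots> = (\<Sum>i<L. cc q i)" unfolding Phi_def phi_def by simp
  finally show ?thesis .
qed

theorem mainTheorem1:
  fixes L B :: nat
    and q :: "nat \<Rightarrow> ('v::finite) pmf"
    and p_data :: "'v list pmf"
    and ptheta :: "'v pseq \<Rightarrow> nat \<Rightarrow> 'v pmf"
    and pr :: "nat \<Rightarrow> nat"
    and tau :: real
  assumes "L \<ge> 1" and "B \<ge> 1" and "B dvd L"
    and "\<And>x. pmf p_data x = (if length x = L then (\<Prod>i<L. pmf (q i) (x ! i)) else 0)"
    and "\<And>xt i. (\<forall>j\<ge>L. xt j = None) \<Longrightarrow> i < L \<Longrightarrow> xt i = None \<Longrightarrow> ptheta xt i = q i"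
    and "inj_on pr {..<L}"
    and "0 < tau" and "tau \<le> 1"
  shows "shannon_entropy (generate L (lcr_step L B pr ptheta)) \<le> shannon_entropy p_data
       \<and> shannon_entropy (generate L (dlcr_step L B tau pr ptheta)) \<le> shannon_entropy p_data"
proof -
  note B = assms(2) and pd = assms(4) and pt = assms(5) and inj = assms(6)
  have Hpd: "shannon_entropy p_data = (\<Sum>i<L. cc q i)" by (rule H_pd[OF pd])
  have common: "\<And>x i. x \<in> Good L q \<Longrightarrow> \<not>(\<forall>i<L. x i \<noteq> None) \<Longrightarrow> i \<in> masked_in_block L B x \<Longrightarrow>
      ptheta x i = q i"
  proof -
    fix x i assume x: "x \<in> Good L q" and nd: "\<not>(\<forall>i<L. x i \<noteq> None)" and i: "i \<in> masked_in_block L B x"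
    note Mp = masked_props[OF B nd]
    show "ptheta x i = q i"
      using x Mp(3,4) i by (intro pt) (auto simp: Good_def Sset_def)
  qed
  have injM: "\<And>x. \<not>(\<forall>i<L. x i \<noteq> None) \<Longrightarrow> inj_on pr (masked_in_block L B x)"
    using inj masked_props(3)[OF B] by (meson inj_on_subset)
  have s1: "shannon_entropy (generate L (lcr_step L B pr ptheta)) \<le> (\<Sum>i<L. cc q i)"
  proof (rule H_gen[OF pd])
    fix x :: "'v pseq" assume x: "x \<in> Good L q"
    show "set_pmf (lcr_step L B pr ptheta x) \<subseteq> Good L q \<and>
      (\<forall>x'\<in>set_pmf (lcr_step L B pr ptheta x). cnt L x' \<le> cnt L x \<and> (cnt L x > 0 \<longrightarrow> cnt L x' < cnt L x)) \<and>
      measure_pmf.expectation (lcr_step L B pr ptheta x) (Phi L q) \<le> Phi L q x"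
      unfolding lcr_eq
    proof (rule step_main[OF B pt x])
      fix y assume nd: "\<not>(\<forall>i<L. x i \<noteq> None)"
      note Mp = masked_props[OF B nd]
      show "{best_pos L B pr ptheta x y} \<subseteq> masked_in_block L B x" using best_in[OF Mp(2,1)] by simp
      show "{best_pos L B pr ptheta x y} \<noteq> {}" by simp
    next
      fix i f w w' assume nd: "\<not>(\<forall>i<L. x i \<noteq> None)" and i: "i \<in> masked_in_block L B x"
        and le: "pmf (q i) w' \<le> pmf (q i) w" and b: "i \<in> {best_pos L B pr ptheta x (f(i := Some w'))}"
      note Mp = masked_props[OF B nd]
      show "i \<in> {best_pos L B pr ptheta x (f(i := Some w))}"
        using best_mono[where q=q and ptheta=ptheta and f=f and w=w and w'=w' and i=i and x=x, OF Mp(2,1) injM[OF nd] i common[OF x nd i] le] b by simp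
    qed
  qed
  have s2: "shannon_entropy (generate L (dlcr_step L B tau pr ptheta)) \<le> (\<Sum>i<L. cc q i)"
  proof (rule H_gen[OF pd])
    fix x :: "'v pseq" assume x: "x \<in> Good L q"
    show "set_pmf (dlcr_step L B tau pr ptheta x) \<subseteq> Good L q \<and>
      (\<forall>x'\<in>set_pmf (dlcr_step L B tau pr ptheta x). cnt L x' \<le> cnt L x \<and> (cnt L x > 0 \<longrightarrow> cnt L x' < cnt L x)) \<and>
      measure_pmf.expectation (dlcr_step L B tau pr ptheta x) (Phi L q) \<le> Phi L q x"
      unfolding dlcr_eq
    proof (rule step_main[OF B pt x])
      fix y assume nd: "\<not>(\<forall>i<L. x i \<noteq> None)"
      note Mp = masked_props[OF B nd]
      show "insert (best_pos L B pr ptheta x y) {i \<in> masked_in_block L B x. tau < confidence ptheta x y i}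
          \<subseteq> masked_in_block L B x" using best_in[OF Mp(2,1)] by auto
      show "insert (best_pos L B pr ptheta x y) {i \<in> masked_in_block L B x. tau < confidence ptheta x y i} \<noteq> {}"
        by simp
    next
      fix i f w w' assume nd: "\<not>(\<forall>i<L. x i \<noteq> None)" and i: "i \<in> masked_in_block L B x"
        and le: "pmf (q i) w' \<le> pmf (q i) w"
        and b: "i \<in> insert (best_pos L B pr ptheta x (f(i := Some w')))
                 {j \<in> masked_in_block L B x. tau < confidence ptheta x (f(i := Some w')) j}"
      note Mp = masked_props[OF B nd]
      have pti: "ptheta x i = q i" by (rule common[OF x nd i])
      show "i \<in> insert (best_pos L B pr ptheta x (f(i := Some w)))
                 {j \<in> masked_in_block L B x. tau < confidence ptheta x (f(i := Some w)) j}"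
      proof (cases "best_pos L B pr ptheta x (f(i := Some w')) = i")
        case True
        then show ?thesis using best_mono[where q=q and ptheta=ptheta and f=f and w=w and w'=w' and i=i and x=x, OF Mp(2,1) injM[OF nd] i pti le] by simp
      next
        case False
        then have "tau < pmf (q i) w'" using b pti by (auto simp: confidence_def)
        then have "tau < pmf (q i) w" using le by linarith
        then show ?thesis using i pti by (auto simp: confidence_def)
      qed
    qed
  qed
  show ?thesis using s1 s2 Hpd by simp
qed


end
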